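(* Let the contents be $\mathcal{C}=\{1,\dots,C\}$ with normalized popularities $\hat\nu_1\ge\hat\nu_2\ge\dots\ge\hat\nu_C>0$, $\sum_c\hat\nu_c=1$, let $\rho>0$, $\rho_c=\rho\hat\nu_c$, and let $M\ge1$ be an integer. Consider the linear program (OPT 2) $$\max_{\tilde{\mathbf m},\boldsymbol\lambda,\mathbf x}\ \sum_{c\in\mathcal{C}}(\rho_c\tilde m_c+x_c)$$ subject to: for all $c$, $0\le\tilde m_c\le1$, $0\le\lambda_c\le\tilde m_c$, $0\le x_c\le\lambda_c$, $x_c\le\rho_c(1-\tilde m_c)$; and $\sum_c\tilde m_c=M$, $\sum_c\lambda_c\le1$. Let $c^*$ be the index such that $\sum_{c=M}^{c^*}\frac{\rho_c}{1+\rho_c}\le1$ but $\sum_{c=M}^{c^*+1}\frac{\rho_c}{1+\rho_c}>1$. Then the following is an optimal solution of OPT 2: (i) for $1\le c\le M-1$: $\tilde m_c=1$, $\lambda_c=x_c=0$; (ii) for $M\le c\le c^*$: $\tilde m_c=\lambda_c=x_c=\rho_c/(1+\rho_c)$; (iii) for $c=c^*+1$: $\tilde m_c=\lambda_c=x_c=1-\sum_{c'=M}^{c^*}\tilde m_{c'}$; (iv) for $c^*+2\le c\le C$: $\tilde m_c=\lambda_c=x_c=0$.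
   Context: In the pure peer-to-peer setting, $\tilde m_c$ is the fraction of boxes caching content $c$, $\lambda_c$ the fraction of total upload bandwidth devoted to content $c$, and $\rho_c$ the (normalized) traffic load of requests for $c$. *)

theory Defs
  imports Complex_Main
begin

text \<open>Contents are indexed by 1..C; vectors are functions nat => real, only
  their values on {1..C} matter.  r c is the traffic load rho_c.\<close>

definition opt2_feasible ::
  "nat \<Rightarrow> nat \<Rightarrow> (nat \<Rightarrow> real) \<Rightarrow> (nat \<Rightarrow> real) \<Rightarrow> (nat \<Rightarrow> real) \<Rightarrow> (nat \<Rightarrow> real) \<Rightarrow> bool" where
  "opt2_feasible C M r m lam x \<longleftrightarrow>
     (\<forall>c\<in>{1..C}. 0 \<le> m c \<and> m c \<le> 1 \<and> 0 \<le> lam c \<and> lam c \<le> m c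
                 \<and> 0 \<le> x c \<and> x c \<le> lam c \<and> x c \<le> r c * (1 - m c))
     \<and> (\<Sum>c=1..C. m c) = real M \<and> (\<Sum>c=1..C. lam c) \<le> 1"

definition opt2_obj :: "nat \<Rightarrow> (nat \<Rightarrow> real) \<Rightarrow> (nat \<Rightarrow> real) \<Rightarrow> (nat \<Rightarrow> real) \<Rightarrow> real" where
  "opt2_obj C r m x = (\<Sum>c=1..C. r c * m c + x c)"

definition opt2_optimal ::
  "nat \<Rightarrow> nat \<Rightarrow> (nat \<Rightarrow> real) \<Rightarrow> (nat \<Rightarrow> real) \<Rightarrow> (nat \<Rightarrow> real) \<Rightarrow> (nat \<Rightarrow> real) \<Rightarrow> bool" where
  "opt2_optimal C M r m lam x \<longleftrightarrow> opt2_feasible C M r m lam x \<and>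
     (\<forall>m' lam' x'. opt2_feasible C M r m' lam' x' \<longrightarrow> opt2_obj C r m' x' \<le> opt2_obj C r m x)"

definition opt2_tail :: "(nat \<Rightarrow> real) \<Rightarrow> nat \<Rightarrow> nat \<Rightarrow> nat \<Rightarrow> real" where
  "opt2_tail r M cs c =
     (if M \<le> c \<and> c \<le> cs then r c / (1 + r c)
      else if c = cs + 1 then 1 - (\<Sum>c'=M..cs. r c' / (1 + r c'))
      else 0)"

definition opt2_m :: "(nat \<Rightarrow> real) \<Rightarrow> nat \<Rightarrow> nat \<Rightarrow> nat \<Rightarrow> real" where
  "opt2_m r M cs c = (if 1 \<le> c \<and> c \<le> M - 1 then 1 else opt2_tail r M cs c)"

definition opt2_lx :: "(nat \<Rightarrow> real) \<Rightarrow> nat \<Rightarrow> nat \<Rightarrow> nat \<Rightarrow> real" where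
  "opt2_lx r M cs c = (if 1 \<le> c \<and> c \<le> M - 1 then 0 else opt2_tail r M cs c)"

end

theory Submission
  imports Defs
begin

lemma bound_lo:
  fixes a m lam x R \<eta> :: real
  assumes "0\<le>x" "x\<le>lam" "lam\<le>m" "m\<le>1" "x \<le> a*(1-m)" "R \<le> a" "0 \<le> \<eta>" "\<eta> \<le> 1"
  shows "a*m + x \<le> \<eta>*R*m + \<eta>*lam + (a - \<eta>*R)"
proof -
  have "(1-m)*(\<eta>*R - \<eta>*a) \<le> 0" using assms by (intro mult_nonneg_nonpos) (auto simp: mult_left_mono)
  have "(1-\<eta>)*x \<le> (1-\<eta>)*(a*(1-m))" using assms by (intro mult_left_mono) auto
  have "\<eta>*x \<le> \<eta>*lam" using assms by (intro mult_left_mono) auto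
  show ?thesis using \<open>(1-m)*(\<eta>*R - \<eta>*a) \<le> 0\<close> \<open>(1-\<eta>)*x \<le> _\<close> \<open>\<eta>*x \<le> _\<close> by (simp add: algebra_simps)
qed

lemma bound_hi:
  fixes a m lam x R K \<eta> :: real
  assumes "0\<le>x" "x\<le>lam" "lam\<le>m" "a \<le> K" "0 \<le> \<eta>" "\<eta> \<le> 1" "\<eta>*(1+R) = 1+K"
  shows "a*m + x \<le> \<eta>*R*m + \<eta>*lam"
proof -
  have "(1-\<eta>)*x \<le> (1-\<eta>)*m" using assms by (intro mult_left_mono) auto
  have "\<eta>*x \<le> \<eta>*lam" using assms by (intro mult_left_mono) auto
  have "(a-K)*m \<le> 0" using assms by (intro mult_nonpos_nonneg) auto
  have e: "\<eta>*(1+R)*m = (1+K)*m" using assms(7) by simp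
  show ?thesis using \<open>(1-\<eta>)*x \<le> _\<close> \<open>\<eta>*x \<le> _\<close> \<open>(a-K)*m \<le> 0\<close> e by (simp add: algebra_simps)
qed

lemma bound_mid:
  fixes a m lam x R K \<eta> :: real
  assumes "0\<le>x" "x\<le>lam" "lam\<le>m" "x \<le> a*(1-m)" "K \<le> a" "a \<le> R" "0 \<le> K" "0 \<le> \<eta>" "\<eta>*(1+R) = 1+K"
  shows "a*m + x \<le> \<eta>*R*m + \<eta>*lam + (a-K)*a/(1+a)"
proof -
  define q where "q = (a-K)/(1+a)"
  define p where "p = 1 - \<eta> - q"
  have a0: "0 \<le> a" using assms by auto
  have q0: "0 \<le> q" unfolding q_def using assms by auto
  have "\<eta>*(1+a) \<le> \<eta>*(1+R)" using assms by (intro mult_left_mono) auto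
  hence "q \<le> 1 - \<eta>" unfolding q_def using a0 assms(9) by (simp add: field_simps)
  hence p0: "0 \<le> p" unfolding p_def by simp
  have "p*x \<le> p*m" using p0 assms by (intro mult_left_mono) auto
  have "q*x \<le> q*(a*(1-m))" using q0 assms by (intro mult_left_mono) auto
  have "\<eta>*x \<le> \<eta>*lam" using assms by (intro mult_left_mono) auto
  have qa: "q*(1+a) = a - K" unfolding q_def using a0 by simp
  have key: "a - \<eta>*R + p - q*a = 0" unfolding p_def using qa assms(9) by (simp add: algebra_simps)
  have "a*m + x = (p*x + q*x + \<eta>*x) + a*m" unfolding p_def by (simp add: algebra_simps)
  also have "\<dots> \<le> p*m + q*(a*(1-m)) + \<eta>*lam + a*m" using \<open>p*x \<le> _\<close> \<open>q*x \<le> _\<close> \<open>\<eta>*x \<le> _\<close> by linarith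
  also have "\<dots> = \<eta>*R*m + \<eta>*lam + q*a + (a - \<eta>*R + p - q*a)*m" by (simp add: algebra_simps)
  also have "\<dots> = \<eta>*R*m + \<eta>*lam + (a-K)*a/(1+a)" using key unfolding q_def by simp
  finally show ?thesis .
qed

lemma split4:
  fixes f :: "nat \<Rightarrow> real"
  assumes "1 \<le> M" "M \<le> cs" "cs+1 \<le> C"
  shows "sum f {1..C} = sum f {1..<M} + sum f {M..cs} + f (cs+1) + sum f {cs+2..C}"
proof -
  have e: "{1..C} = {1..<M} \<union> ({M..cs} \<union> ({cs+1} \<union> {cs+2..C}))" using assms by auto
  have d1: "sum f ({cs+1} \<union> {cs+2..C}) = f (cs+1) + sum f {cs+2..C}"
    by (subst sum.union_disjoint) auto
  have d2: "sum f ({M..cs} \<union> ({cs+1} \<union> {cs+2..C})) = sum f {M..cs} + sum f ({cs+1} \<union> {cs+2..C})"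
    by (rule sum.union_disjoint) auto
  have d3: "sum f ({1..<M} \<union> ({M..cs} \<union> ({cs+1} \<union> {cs+2..C}))) = sum f {1..<M} + sum f ({M..cs} \<union> ({cs+1} \<union> {cs+2..C}))"
    using assms by (intro sum.union_disjoint) auto
  show ?thesis unfolding e d3 d2 d1 by (simp add: algebra_simps)
qed

theorem theorem2:
  fixes C M cs :: nat and \<nu> :: "nat \<Rightarrow> real" and \<rho> :: real
  assumes nonincr: "\<And>c. 1 \<le> c \<Longrightarrow> c < C \<Longrightarrow> \<nu> (Suc c) \<le> \<nu> c"
    and pos: "\<And>c. 1 \<le> c \<Longrightarrow> c \<le> C \<Longrightarrow> 0 < \<nu> c"
    and norm: "(\<Sum>c=1..C. \<nu> c) = 1"
    and rho_pos: "0 < \<rho>"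
    and M_ge: "1 \<le> M"
    and cs_le: "cs + 1 \<le> C"
    and cs1: "(\<Sum>c=M..cs. (\<rho> * \<nu> c) / (1 + \<rho> * \<nu> c)) \<le> 1"
    and cs2: "(\<Sum>c=M..cs+1. (\<rho> * \<nu> c) / (1 + \<rho> * \<nu> c)) > 1"
  shows "opt2_optimal C M (\<lambda>c. \<rho> * \<nu> c)
           (opt2_m (\<lambda>c. \<rho> * \<nu> c) M cs)
           (opt2_lx (\<lambda>c. \<rho> * \<nu> c) M cs)
           (opt2_lx (\<lambda>c. \<rho> * \<nu> c) M cs)"
proof -
  define r where "r = (\<lambda>c. \<rho> * \<nu> c)"
  have rdef: "(\<lambda>c. \<rho> * \<nu> c) = r" unfolding r_def ..
  have rpos: "\<And>c. 1 \<le> c \<Longrightarrow> c \<le> C \<Longrightarrow> 0 < r c" using pos rho_pos unfolding r_def by simp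
  have monoall: "\<forall>j. i \<le> j \<longrightarrow> j \<le> C \<longrightarrow> r j \<le> r i" if "1 \<le> i" for i
  proof
    fix j show "i \<le> j \<longrightarrow> j \<le> C \<longrightarrow> r j \<le> r i"
    proof (induction j)
      case 0 then show ?case using that by simp
    next
      case (Suc j)
      show ?case
      proof (intro impI)
        assume a: "i \<le> Suc j" "Suc j \<le> C"
        show "r (Suc j) \<le> r i"
        proof (cases "i = Suc j")
          case True then show ?thesis by simp
        next
          case False
          hence "i \<le> j" using a by simp
          have "r (Suc j) \<le> r j" unfolding r_def using nonincr[of j] \<open>i \<le> j\<close> that a rho_pos
            by (intro mult_left_mono) auto
          then show ?thesis using Suc \<open>i \<le> j\<close> a by simp
        qed
      qed
    qed
  qed
  have mono: "\<And>i j. 1 \<le> i \<Longrightarrow> i \<le> j \<Longrightarrow> j \<le> C \<Longrightarrow> r j \<le> r i" using monoall by blast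
  define S where "S = (\<Sum>c=M..cs. r c / (1 + r c))"
  define K where "K = r (cs+1)"
  define R where "R = r M"
  define t where "t = 1 - S"
  define \<eta> where "\<eta> = (1+K)/(1+R)"
  have S1: "S \<le> 1" using cs1 unfolding S_def r_def .
  have Mcs1: "M \<le> cs+1"
  proof (rule ccontr)
    assume "\<not> M \<le> cs+1" hence "{M..cs+1} = {}" by auto
    then show False using cs2 by simp
  qed
  have S2: "S + K/(1+K) > 1" using cs2 Mcs1 unfolding S_def K_def r_def
    by (simp add: sum.cl_ivl_Suc)
  have Kpos: "0 < K" unfolding K_def using rpos[of "cs+1"] cs_le by simp
  have Mcs: "M \<le> cs"
  proof (rule ccontr)
    assume "\<not> M \<le> cs" hence "S = 0" unfolding S_def by simp
    moreover have "K/(1+K) < 1" using Kpos by simp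
    ultimately show False using S2 by simp
  qed
  have Rpos: "0 < R" unfolding R_def using rpos[of M] M_ge Mcs cs_le by simp
  have KR: "K \<le> R" unfolding K_def R_def using mono[of M "cs+1"] M_ge Mcs cs_le by simp
  have S0: "0 \<le> S" unfolding S_def using rpos M_ge cs_le
    by (intro sum_nonneg) (simp add: less_imp_le)
  have eta0: "0 \<le> \<eta>" "\<eta> \<le> 1" unfolding \<eta>_def using Kpos Rpos KR by auto
  have etaeq: "\<eta>*(1+R) = 1+K" unfolding \<eta>_def using Rpos by simp
  have t0: "0 \<le> t" "t \<le> 1" unfolding t_def using S0 S1 by auto
  have tK: "t < K/(1+K)" unfolding t_def using S2 by simp
  have tK2: "t \<le> K*(1-t)"
  proof -
    have "t*(1+K) < K" using tK Kpos by (simp add: field_simps)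
    then show ?thesis by (simp add: algebra_simps)
  qed
  define m0 where "m0 = opt2_m r M cs"
  define l0 where "l0 = opt2_lx r M cs"
  have v1: "m0 c = 1" "l0 c = 0" if "1 \<le> c" "c < M" for c
    using that unfolding m0_def l0_def opt2_m_def opt2_lx_def by auto
  have v2: "m0 c = r c/(1+r c)" "l0 c = r c/(1+r c)" if "M \<le> c" "c \<le> cs" for c
    using that M_ge unfolding m0_def l0_def opt2_m_def opt2_lx_def opt2_tail_def by auto
  have v3: "m0 (cs+1) = t" "l0 (cs+1) = t"
    using Mcs M_ge unfolding m0_def l0_def opt2_m_def opt2_lx_def opt2_tail_def t_def S_def by auto
  have v4: "m0 c = 0" "l0 c = 0" if "cs+2 \<le> c" for c
    using that Mcs M_ge unfolding m0_def l0_def opt2_m_def opt2_lx_def opt2_tail_def by auto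
  have sum_m0: "(\<Sum>c=1..C. m0 c) = real M"
  proof -
    have "(\<Sum>c=1..C. m0 c) = (\<Sum>c\<in>{1..<M}. 1) + (\<Sum>c=M..cs. r c/(1+r c)) + t + (\<Sum>c\<in>{cs+2..C}. 0)"
      unfolding split4[OF M_ge Mcs cs_le] using v1 v2 v3 v4 by simp
    also have "\<dots> = real M" unfolding t_def S_def[symmetric] using M_ge by (simp add: of_nat_diff)
    finally show ?thesis .
  qed
  have sum_l0: "(\<Sum>c=1..C. l0 c) = 1"
  proof -
    have "(\<Sum>c=1..C. l0 c) = (\<Sum>c\<in>{1..<M}. 0) + (\<Sum>c=M..cs. r c/(1+r c)) + t + (\<Sum>c\<in>{cs+2..C}. 0)"
      unfolding split4[OF M_ge Mcs cs_le] using v1 v2 v3 v4 by simp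
    also have "\<dots> = 1" unfolding t_def S_def[symmetric] by simp
    finally show ?thesis .
  qed
  have cases: "c < M \<or> (M \<le> c \<and> c \<le> cs) \<or> c = cs+1 \<or> cs+2 \<le> c" for c by auto
  have feas0: "opt2_feasible C M r m0 l0 l0"
    unfolding opt2_feasible_def
  proof (intro conjI ballI sum_m0)
    show "(\<Sum>c=1..C. l0 c) \<le> 1" using sum_l0 by simp
  next
    fix c assume c: "c \<in> {1..C}"
    have "0 \<le> m0 c \<and> m0 c \<le> 1 \<and> 0 \<le> l0 c \<and> l0 c \<le> m0 c \<and> 0 \<le> l0 c \<and> l0 c \<le> l0 c \<and> l0 c \<le> r c * (1 - m0 c)"
      using cases[of c]
    proof (elim disjE conjE)
      assume "c < M" then show ?thesis using v1 c by simp
    next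
      assume a: "M \<le> c" "c \<le> cs"
      have rc: "0 < r c" using rpos c by simp
      have "r c * (1 - r c/(1+r c)) = r c/(1+r c)" using rc by (simp add: field_simps)
      then show ?thesis using v2[OF a] rc by simp
    next
      assume "c = cs+1" then show ?thesis using v3 t0 tK2 K_def by simp
    next
      assume "cs+2 \<le> c" then show ?thesis using v4 rpos[of c] c by simp
    qed
    then show "0 \<le> m0 c" "m0 c \<le> 1" "0 \<le> l0 c" "l0 c \<le> m0 c" "0 \<le> l0 c" "l0 c \<le> l0 c"
      "l0 c \<le> r c * (1 - m0 c)" by auto
  qed
  define h where "h c = (if c < M then r c - \<eta>*R else if c \<le> cs then (r c - K)*r c/(1+r c) else 0)" for c
  have eq0: "r c * m0 c + l0 c = \<eta>*R*m0 c + \<eta>*l0 c + h c" if c: "c \<in> {1..C}" for c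
    using cases[of c]
  proof (elim disjE conjE)
    assume "c < M" then show ?thesis using v1 c unfolding h_def by simp
  next
    assume a: "M \<le> c" "c \<le> cs"
    have rc: "0 < r c" using rpos c by simp
    define q where "q = r c/(1+r c)"
    have q1: "q*(1+r c) = r c" unfolding q_def using rc by simp
    have "(r c - K)*r c/(1+r c) = (r c - K)*q" unfolding q_def by simp
    hence "\<eta>*R*q + \<eta>*q + (r c - K)*r c/(1+r c) = q*(\<eta>*(1+R) + r c - K)"
      by (simp add: algebra_simps)
    also have "\<dots> = q*(1 + r c)" using etaeq by simp
    finally have "\<eta>*R*q + \<eta>*q + (r c - K)*r c/(1+r c) = r c * q + q" using q1
      by (simp add: algebra_simps)
    then show ?thesis using v2[OF a] a unfolding h_def q_def by simp
  next
    assume a: "c = cs+1"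
    have "(1+K)*t = \<eta>*(1+R)*t" using etaeq by simp
    then show ?thesis using v3 a Mcs unfolding h_def K_def by (simp add: algebra_simps)
  next
    assume "cs+2 \<le> c" then show ?thesis using v4 Mcs unfolding h_def by simp
  qed
  have obj0: "opt2_obj C r m0 l0 = \<eta>*R*real M + \<eta> + sum h {1..C}"
  proof -
    have "opt2_obj C r m0 l0 = (\<Sum>c=1..C. \<eta>*R*m0 c + \<eta>*l0 c + h c)"
      unfolding opt2_obj_def using eq0 by (intro sum.cong) auto
    also have "\<dots> = \<eta>*R*(\<Sum>c=1..C. m0 c) + \<eta>*(\<Sum>c=1..C. l0 c) + sum h {1..C}"
      by (simp add: sum.distrib sum_distrib_left)
    finally show ?thesis using sum_m0 sum_l0 by simp
  qed
  have opt: "opt2_obj C r m' x' \<le> opt2_obj C r m0 l0" if f: "opt2_feasible C M r m' lam' x'" for m' lam' x'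
  proof -
    have fc: "\<And>c. c \<in> {1..C} \<Longrightarrow> 0 \<le> m' c \<and> m' c \<le> 1 \<and> 0 \<le> lam' c \<and> lam' c \<le> m' c
                 \<and> 0 \<le> x' c \<and> x' c \<le> lam' c \<and> x' c \<le> r c * (1 - m' c)"
      and sm: "(\<Sum>c=1..C. m' c) = real M" and sl: "(\<Sum>c=1..C. lam' c) \<le> 1"
      using f unfolding opt2_feasible_def by auto
    have le: "r c * m' c + x' c \<le> \<eta>*R*m' c + \<eta>*lam' c + h c" if c: "c \<in> {1..C}" for c
      using cases[of c]
    proof (elim disjE conjE)
      assume a: "c < M"
      have "R \<le> r c" unfolding R_def using mono[of c M] a c Mcs cs_le by simp
      then show ?thesis using bound_lo[of "x' c" "lam' c" "m' c" "r c" R \<eta>] fc[OF c] eta0 a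
        unfolding h_def by simp
    next
      assume a: "M \<le> c" "c \<le> cs"
      have "R \<ge> r c" unfolding R_def using mono[of M c] a c M_ge by simp
      moreover have "K \<le> r c" unfolding K_def using mono[of c "cs+1"] a c M_ge cs_le by simp
      ultimately show ?thesis using bound_mid[of "x' c" "lam' c" "m' c" "r c" K R \<eta>] fc[OF c] eta0 etaeq a Kpos
        unfolding h_def by simp
    next
      assume a: "c = cs+1"
      then show ?thesis using bound_hi[of "x' c" "lam' c" "m' c" "r c" K \<eta> R] fc[OF c] eta0 etaeq Mcs
        unfolding h_def K_def by simp
    next
      assume a: "cs+2 \<le> c"
      have "r c \<le> K" unfolding K_def using mono[of "cs+1" c] a c by simp
      then show ?thesis using bound_hi[of "x' c" "lam' c" "m' c" "r c" K \<eta> R] fc[OF c] eta0 etaeq a Mcs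
        unfolding h_def by simp
    qed
    have "opt2_obj C r m' x' \<le> (\<Sum>c=1..C. \<eta>*R*m' c + \<eta>*lam' c + h c)"
      unfolding opt2_obj_def using le by (intro sum_mono) auto
    also have "\<dots> = \<eta>*R*(\<Sum>c=1..C. m' c) + \<eta>*(\<Sum>c=1..C. lam' c) + sum h {1..C}"
      by (simp add: sum.distrib sum_distrib_left)
    also have "\<dots> \<le> \<eta>*R*real M + \<eta> + sum h {1..C}"
      using sm sl eta0 mult_left_mono[OF sl eta0(1)] by simp
    finally show ?thesis using obj0 by simp
  qed
  show ?thesis unfolding rdef opt2_optimal_def m0_def[symmetric] l0_def[symmetric]
    using feas0 opt by blast
qed

end
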